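(* Let $H$ be a $C^2$ null hypersurface, $n$ a $C^1$ future-directed lightlike vector field tangent to $H$, extended near $p\in H$ to a $C^1$ lightlike field with $\nabla_nn=\kappa n$. Let $V$ be a smooth future-directed timelike vector field and use local cylinder coordinates $(x^0,\mathbf x)$ with $V=\partial_0$ in which $H$ is the graph of a $C^2$ function $x^0=h(\mathbf x)$. Define on $H$ the functions of $\mathbf x$ $$\tilde n^i=-g(n,V)\,\big[g^{ij}(h(\mathbf x),\mathbf x)\,\partial_jh-g^{i0}(h(\mathbf x),\mathbf x)\big],\quad i=1,\dots,n,$$ and $\theta=\nabla_\mu n^\mu|_{x^0=h(\mathbf x)}-\kappa$. Then for every $C^1$ function $\varphi:M\to\mathbb R$, $$\partial_i\Big(\varphi\,\tilde n^i\,\frac{\sqrt{-|g|(h(\mathbf x),\mathbf x)}}{-g(n,V)}\Big)=\big[\varphi\,\theta+\partial_n\varphi\big]\frac{\sqrt{-|g|(h(\mathbf x),\mathbf x)}}{-g(n,V)},$$ where all quantities are evaluated at $(h(\mathbf x),\mathbf x)$. Consequently $$\theta=\frac{-g(n,V)}{\sqrt{-|g|}}\,\partial_i\Big\{\big[g^{ij}\partial_jh-g^{i0}\big]\sqrt{-|g|}\Big\}\Big|_{x^0=h(\mathbf x)} .$$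
   Context: Spacetime: paracompact time-oriented Lorentzian manifold of dimension $n+1\ge2$, signature $(-,+,\dots,+)$, $C^3$ metric; $|g|$ denotes $\det g_{\mu\nu}$, $g^{\mu\nu}$ the inverse metric. Local cylinder coordinates: with $S$ a small hypersurface transverse to $V$ carrying coordinates $\mathbf x=(x^1,\dots,x^n)$, the point $\varphi_{x^0}(\mathbf x)$ ($\varphi$ the flow of $V$) has coordinates $(x^0,\mathbf x)$, so $V=\partial_0$. The vector field $\tilde n=\tilde n^i\partial_i$ is the projection of $n$ along the flow of $V$. *)

theory Defs
  imports "HOL-Analysis.Analysis"
begin

text \<open>Everything is expressed in a local cylinder chart.  A spacetime point has
coordinates (x0, x) in real \<times> (real^'n); spacetime indices are of type 'n option,
with None the time index 0 and Some i the spatial index i.  So the spacetime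
dimension is CARD('n) + 1 \<ge> 2.  The vector field V is the coordinate field
d/dx0, with components axis None 1.\<close>

definition ev :: "'n::finite option \<Rightarrow> real \<times> (real^'n)" where
  "ev mu = (case mu of None \<Rightarrow> (1, 0) | Some i \<Rightarrow> (0, axis i 1))"

definition pd :: "'n::finite option \<Rightarrow> (real \<times> (real^'n) \<Rightarrow> real) \<Rightarrow> real \<times> (real^'n) \<Rightarrow> real" where
  "pd mu f p = frechet_derivative f (at p) (ev mu)"

definition spd :: "'n::finite \<Rightarrow> (real^'n \<Rightarrow> real) \<Rightarrow> real^'n \<Rightarrow> real" where
  "spd i u x = frechet_derivative u (at x) (axis i 1)"

primrec Ck :: "nat \<Rightarrow> 'a::euclidean_space set \<Rightarrow> ('a \<Rightarrow> real) \<Rightarrow> bool" where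
  "Ck 0 U f = continuous_on U f"
| "Ck (Suc k) U f = ((\<forall>x\<in>U. f differentiable (at x)) \<and>
                     (\<forall>b\<in>Basis. Ck k U (\<lambda>x. frechet_derivative f (at x) b)))"

definition gform :: "real^'k^'k \<Rightarrow> real^'k \<Rightarrow> real^'k \<Rightarrow> real" where
  "gform A v w = (\<Sum>a\<in>UNIV. \<Sum>b\<in>UNIV. A $ a $ b * v $ a * w $ b)"

definition lorentzian :: "real^('n::finite option)^('n option) \<Rightarrow> bool" where
  "lorentzian A \<longleftrightarrow> transpose A = A \<and>
     (\<exists>P::real^('n option)^('n option). invertible P \<and> transpose P ** A ** P =
        (\<chi> a b. if a = b then (if a = None then -1 else 1) else 0))"

definition ginv :: "(real \<times> (real^'n) \<Rightarrow> real^('n::finite option)^('n option))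
                     \<Rightarrow> real \<times> (real^'n) \<Rightarrow> real^('n option)^('n option)" where
  "ginv g p = matrix_inv (g p)"

definition christoffel :: "(real \<times> (real^'n) \<Rightarrow> real^('n::finite option)^('n option))
     \<Rightarrow> 'n option \<Rightarrow> 'n option \<Rightarrow> 'n option \<Rightarrow> real \<times> (real^'n) \<Rightarrow> real" where
  "christoffel g a b c p = (1/2) * (\<Sum>s\<in>UNIV. ginv g p $ a $ s *
      (pd b (\<lambda>q. g q $ s $ c) p + pd c (\<lambda>q. g q $ s $ b) p - pd s (\<lambda>q. g q $ b $ c) p))"

definition covd :: "(real \<times> (real^'n) \<Rightarrow> real^('n::finite option)^('n option))
     \<Rightarrow> (real \<times> (real^'n) \<Rightarrow> real^('n option)) \<Rightarrow> (real \<times> (real^'n) \<Rightarrow> real^('n option))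
     \<Rightarrow> real \<times> (real^'n) \<Rightarrow> real^('n option)" where
  "covd g X Y p = (\<chi> a. (\<Sum>b\<in>UNIV. X p $ b * pd b (\<lambda>q. Y q $ a) p)
      + (\<Sum>b\<in>UNIV. \<Sum>c\<in>UNIV. christoffel g a b c p * X p $ b * Y p $ c))"

definition divergence :: "(real \<times> (real^'n) \<Rightarrow> real^('n::finite option)^('n option))
     \<Rightarrow> (real \<times> (real^'n) \<Rightarrow> real^('n option)) \<Rightarrow> real \<times> (real^'n) \<Rightarrow> real" where
  "divergence g X p = (\<Sum>a\<in>UNIV. pd a (\<lambda>q. X q $ a) p)
      + (\<Sum>a\<in>UNIV. \<Sum>b\<in>UNIV. christoffel g a a b p * X p $ b)"

definition dirderiv :: "(real \<times> (real^'n) \<Rightarrow> real^('n::finite option))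
     \<Rightarrow> (real \<times> (real^'n) \<Rightarrow> real) \<Rightarrow> real \<times> (real^'n) \<Rightarrow> real" where
  "dirderiv X phi p = (\<Sum>a\<in>UNIV. X p $ a * pd a phi p)"

definition graph_tangent :: "(real^'n::finite \<Rightarrow> real) \<Rightarrow> real^'n \<Rightarrow> real^('n option) \<Rightarrow> bool" where
  "graph_tangent h x v \<longleftrightarrow> (\<exists>w. v $ None = frechet_derivative h (at x) w \<and> (\<forall>j. v $ Some j = w $ j))"

text \<open>The graph is a null hypersurface at (h x, x): the induced metric is degenerate.\<close>
definition null_graph :: "(real \<times> (real^'n) \<Rightarrow> real^('n::finite option)^('n option))
     \<Rightarrow> (real^'n \<Rightarrow> real) \<Rightarrow> real^'n \<Rightarrow> bool" where
  "null_graph g h x \<longleftrightarrow> (\<exists>v. graph_tangent h x v \<and> v \<noteq> 0 \<and>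
       (\<forall>u. graph_tangent h x u \<longrightarrow> gform (g (h x, x)) v u = 0))"

definition gnV :: "(real \<times> (real^'n) \<Rightarrow> real^('n::finite option)^('n option))
     \<Rightarrow> (real \<times> (real^'n) \<Rightarrow> real^('n option)) \<Rightarrow> real \<times> (real^'n) \<Rightarrow> real" where
  "gnV g nf p = gform (g p) (nf p) (axis None 1)"

definition bracket :: "(real \<times> (real^'n) \<Rightarrow> real^('n::finite option)^('n option))
     \<Rightarrow> (real^'n \<Rightarrow> real) \<Rightarrow> 'n \<Rightarrow> real^'n \<Rightarrow> real" where
  "bracket g h i x = (\<Sum>j\<in>UNIV. ginv g (h x, x) $ Some i $ Some j * spd j h x)
                     - ginv g (h x, x) $ Some i $ None"

definition ntilde :: "(real \<times> (real^'n) \<Rightarrow> real^('n::finite option)^('n option))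
     \<Rightarrow> (real^'n \<Rightarrow> real) \<Rightarrow> (real \<times> (real^'n) \<Rightarrow> real^('n option)) \<Rightarrow> 'n \<Rightarrow> real^'n \<Rightarrow> real" where
  "ntilde g h nf i x = - gnV g nf (h x, x) * bracket g h i x"

definition volH :: "(real \<times> (real^'n) \<Rightarrow> real^('n::finite option)^('n option))
     \<Rightarrow> (real^'n \<Rightarrow> real) \<Rightarrow> real^'n \<Rightarrow> real" where
  "volH g h x = sqrt (- det (g (h x, x)))"

definition thetaH :: "(real \<times> (real^'n) \<Rightarrow> real^('n::finite option)^('n option))
     \<Rightarrow> (real^'n \<Rightarrow> real) \<Rightarrow> (real \<times> (real^'n) \<Rightarrow> real^('n option))
     \<Rightarrow> (real \<times> (real^'n) \<Rightarrow> real) \<Rightarrow> real^'n \<Rightarrow> real" where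
  "thetaH g h nf kappa x = divergence g nf (h x, x) - kappa (h x, x)"

end

theory Submission
  imports Defs
begin


lemma sum_option:
  "(\<Sum>a\<in>(UNIV::'n::finite option set). f a) = f None + (\<Sum>i\<in>UNIV. f (Some i))"
proof -
  have "(UNIV::'n option set) = insert None (Some ` UNIV)"
    by (auto, metis not_None_eq rangeI)
  then have "sum f UNIV = sum f (insert None (range Some))" by metis
  then show ?thesis
    by (simp add: sum.reindex)
qed

lemma inv_props:
  fixes A :: "real^'m^'m"
  assumes "det A \<noteq> 0"
  shows "A ** matrix_inv A = mat 1" "matrix_inv A ** A = mat 1"
proof -
  have "invertible A" using assms invertible_det_nz by blast
  then have "\<exists>A'. A ** A' = mat 1 \<and> A' ** A = mat 1" unfolding invertible_def .
  then have "A ** matrix_inv A = mat 1 \<and> matrix_inv A ** A = mat 1"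
    unfolding matrix_inv_def by (rule someI_ex)
  then show "A ** matrix_inv A = mat 1" "matrix_inv A ** A = mat 1" by auto
qed

lemma inv_sym:
  fixes A :: "real^'m^'m"
  assumes "det A \<noteq> 0" "transpose A = A"
  shows "transpose (matrix_inv A) = matrix_inv A"
proof -
  have "transpose (matrix_inv A) ** A = mat 1"
    using inv_props(1)[OF assms(1)] assms(2)
    by (metis matrix_transpose_mul transpose_mat)
  then have "transpose (matrix_inv A) ** A ** matrix_inv A = matrix_inv A"
    by simp
  then show ?thesis using inv_props(1)[OF assms(1)]
    by (metis matrix_mul_assoc matrix_mul_rid)
qed

definition eta :: "real^('n::finite option)^('n option)" where
  "eta = (\<chi> a b. if a = b then (if a = None then -1 else 1) else 0)"

lemma det_eta: "det (eta::real^('n::finite option)^('n option)) = -1"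
proof -
  have "det (eta::real^('n::finite option)^('n option)) = (\<Prod>a\<in>UNIV. (eta::real^('n::finite option)^('n option)) $ a $ a)"
    by (rule det_diagonal) (simp add: eta_def)
  also have "\<dots> = -1"
  proof -
    have "(UNIV::'n option set) = insert None (Some ` UNIV)"
      by (auto, metis not_None_eq rangeI)
    then show ?thesis by (simp add: prod.reindex eta_def)
  qed
  finally show ?thesis .
qed

lemma lorentz_det:
  fixes A :: "real^('n::finite option)^('n option)"
  assumes "lorentzian A"
  shows "det A < 0"
proof -
  obtain P :: "real^('n option)^('n option)" where P: "transpose P ** A ** P = eta"
    using assms unfolding lorentzian_def eta_def by blast
  have "det (transpose P ** A ** P) = det P * det A * det P"
    by (simp add: det_mul)
  moreover have "det (eta::real^('n option)^('n option)) = -1" by (rule det_eta)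
  ultimately have "det A * (det P * det P) = -1" using P by (simp add: algebra_simps)
  moreover have "det P * det P \<ge> 0" by simp
  ultimately show ?thesis
    by (smt (verit) mult_nonneg_nonneg)
qed

lemma gform_inner: "gform A v w = inner v (A *v w)"
  by (simp add: gform_def inner_vec_def matrix_vector_mult_def sum_distrib_left algebra_simps)

lemma gform_transform:
  "gform A (P *v a) (P *v b) = gform (transpose P ** A ** P) a b"
  unfolding gform_inner
  by (metis dot_lmul_matrix matrix_vector_mul_assoc vector_transpose_matrix)

lemma gform_eta:
  "gform (eta::real^('n::finite option)^('n option)) a b =
     - a$None * b$None + (\<Sum>i\<in>UNIV. a $ Some i * b $ Some i)"
proof -
  have "gform (eta::real^('n::finite option)^('n option)) a b = (\<Sum>c\<in>UNIV. eta$c$c * a$c * b$c)"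
    unfolding gform_def
  proof (rule sum.cong)
    fix c assume "c \<in> (UNIV::'n option set)"
    have "(\<Sum>d\<in>UNIV. (eta::real^('n::finite option)^('n option))$c$d * a$c * b$d) = (\<Sum>d\<in>UNIV. (if d = c then eta$c$c * a$c * b$d else 0))"
      by (rule sum.cong) (auto simp: eta_def)
    then show "(\<Sum>ba\<in>UNIV. (eta::real^('n::finite option)^('n option))$c$ba * a$c * b$ba) = eta$c$c * a$c * b$c" by simp
  qed simp
  also have "\<dots> = - a$None * b$None + (\<Sum>i\<in>UNIV. a $ Some i * b $ Some i)"
    by (simp add: sum_option eta_def)
  finally show ?thesis .
qed

lemma gform_quad:
  "gform M (u - c *\<^sub>R v) (u - c *\<^sub>R v) =
   gform M u u - c * gform M u v - c * gform M v u + c*c * gform M v v"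
  by (simp add: gform_def algebra_simps sum_subtractf sum.distrib sum_distrib_left)

lemma gform_sym:
  assumes "transpose A = A" shows "gform A x y = gform A y x"
proof -
  have "\<And>a b. A$a$b = A$b$a" using assms by (metis transpose_def vec_lambda_beta)
  then show ?thesis unfolding gform_def
    by (subst sum.swap) (simp add: algebra_simps)
qed

lemma gform_scale1: "gform A (c *\<^sub>R x) y = c * gform A x y"
  by (simp add: gform_def sum_distrib_left algebra_simps)

lemma lorentz_parallel:
  fixes A :: "real^('n::finite option)^('n option)"
  assumes L: "lorentzian A" and x0: "x \<noteq> 0"
    and xx: "gform A x x = 0" and yy: "gform A y y = 0" and xy: "gform A x y = 0"
  shows "\<exists>c. y = c *\<^sub>R x"
proof -
  obtain P :: "real^('n option)^('n option)" where P: "invertible P" and PAP: "transpose P ** A ** P = eta"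
    and sym: "transpose A = A"
    using L unfolding lorentzian_def eta_def by blast
  define Q where "Q = matrix_inv P"
  have PQ: "P ** Q = mat 1" using P inv_props invertible_det_nz Q_def by blast
  define x' where "x' = Q *v x"
  define y' where "y' = Q *v y"
  have xP: "x = P *v x'" unfolding x'_def by (simp add: matrix_vector_mul_assoc PQ)
  have yP: "y = P *v y'" unfolding y'_def by (simp add: matrix_vector_mul_assoc PQ)
  have gt: "\<And>a b. gform A (P *v a) (P *v b) = gform eta a b"
    using gform_transform PAP by metis
  have spacezero: "\<And>z::real^('n option). gform eta z z = 0 \<Longrightarrow> z $ None = 0 \<Longrightarrow> z = 0"
  proof -
    fix z :: "real^('n option)"
    assume a: "gform eta z z = 0" "z $ None = 0"
    then have "(\<Sum>i\<in>UNIV. z $ Some i * z $ Some i) = 0" by (simp add: gform_eta)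
    then have "\<forall>i\<in>UNIV. z $ Some i * z $ Some i = 0"
      by (subst sum_nonneg_eq_0_iff[symmetric]) auto
    then have "\<forall>a. z $ a = 0" using a(2) by (metis (full_types) mult_eq_0_iff not_None_eq UNIV_I)
    then show "z = 0" by (simp add: vec_eq_iff)
  qed
  have x'0: "x' $ None \<noteq> 0"
  proof
    assume "x' $ None = 0"
    moreover have "gform eta x' x' = 0" using xx xP gt by metis
    ultimately have "x' = 0" using spacezero by blast
    then show False using x0 xP by simp
  qed
  define c where "c = y' $ None / x' $ None"
  define z where "z = y' - c *\<^sub>R x'"
  have zN: "z $ None = 0" using x'0 by (simp add: z_def c_def)
  have "gform eta z z = gform eta y' y' - c * gform eta y' x' - c * gform eta x' y' + c*c*gform eta x' x'"
    unfolding z_def by (rule gform_quad)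
  moreover have "gform eta y' y' = 0" using yy yP gt by metis
  moreover have "gform eta x' x' = 0" using xx xP gt by metis
  moreover have "gform eta x' y' = 0" using xy xP yP gt by metis
  moreover have "gform eta y' x' = 0" using xy xP yP gt gform_sym[OF sym] by metis
  ultimately have "gform eta z z = 0" by simp
  then have "z = 0" using spacezero zN by blast
  then have "y' = c *\<^sub>R x'" unfolding z_def by simp
  then have "y = c *\<^sub>R x" using xP yP by (simp add: matrix_vector_mult_scaleR)
  then show ?thesis by blast
qed


lemma sum2_swap_sym:
  fixes G :: "'k::finite \<Rightarrow> 'k \<Rightarrow> real"
  assumes "\<And>a b. G a b = G b a"
  shows "(\<Sum>a\<in>UNIV. \<Sum>b\<in>UNIV. G a b * X a * Y b) = (\<Sum>a\<in>UNIV. \<Sum>b\<in>UNIV. G a b * Y a * X b)"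
  by (subst sum.swap) (simp add: assms mult.commute mult.left_commute)

lemma algebra_core:
  fixes G :: "'n::finite option \<Rightarrow> 'n option \<Rightarrow> real"
    and dG :: "'n option \<Rightarrow> 'n option \<Rightarrow> 'n option \<Rightarrow> real"
    and N :: "'n option \<Rightarrow> real" and dN :: "'n option \<Rightarrow> 'n option \<Rightarrow> real"
    and Gam :: "'n option \<Rightarrow> 'n option \<Rightarrow> 'n option \<Rightarrow> real"
    and s :: "'n \<Rightarrow> real" and dphi dvol L :: "'n option \<Rightarrow> real"
  assumes Gsym: "\<And>a b. G a b = G b a"
    and dGsym: "\<And>c a b. dG c a b = dG c b a"
    and psi: "psi = - (\<Sum>a\<in>UNIV. G a None * N a)"
    and psi0: "psi \<noteq> 0"
    and L: "\<And>c. L c = - (\<Sum>a\<in>UNIV. dG c a None * N a + G a None * dN c a)"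
    and dvol: "\<And>c. dvol c = vol * (\<Sum>a\<in>UNIV. Gam a a c)"
    and T: "N None = (\<Sum>i\<in>UNIV. N (Some i) * s i)"
    and Nn: "\<And>i. (\<Sum>a\<in>UNIV. G a (Some i) * N a) = psi * s i"
    and L0: "(\<Sum>a\<in>UNIV. \<Sum>b\<in>UNIV. dG None a b * N a * N b + G a b * dN None a * N b + G a b * N a * dN None b) = 0"
    and Geo: "(\<Sum>a\<in>UNIV. G a None * ((\<Sum>b\<in>UNIV. N b * dN b a) + (\<Sum>b\<in>UNIV. \<Sum>c\<in>UNIV. Gam a b c * N b * N c)))
               = kappa * (\<Sum>a\<in>UNIV. G a None * N a)"
    and Low: "\<And>b c. (\<Sum>a\<in>UNIV. G a None * Gam a b c) = (dG b None c + dG c None b - dG None b c) / 2"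
  shows "(\<Sum>i\<in>UNIV. (dphi (Some i) * N (Some i) + phi * dN (Some i) (Some i)) * vol / psi
                     + phi * N (Some i) * dvol (Some i) / psi - phi * N (Some i) * vol * L (Some i) / psi^2
                   + ((dphi None * N (Some i) + phi * dN None (Some i)) * vol / psi
                     + phi * N (Some i) * dvol None / psi - phi * N (Some i) * vol * L None / psi^2) * s i)
    = (phi * ((\<Sum>a\<in>UNIV. dN a a) + (\<Sum>a\<in>UNIV. \<Sum>b\<in>UNIV. Gam a a b * N b) - kappa)
        + (\<Sum>a\<in>UNIV. N a * dphi a)) * vol / psi" (is "?LHS = ?RHS")
proof -
  define K where "K = phi * vol / psi"
  define A where "A c = (dphi c * vol + phi * dvol c) / psi - phi * vol * L c / psi^2" for c
  have dF: "\<And>c m. (dphi c * N m + phi * dN c m) * vol / psi + phi * N m * dvol c / psi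
                - phi * N m * vol * L c / psi^2 = A c * N m + K * dN c m"
    unfolding A_def K_def using psi0 by (simp add: field_simps)
  define Q where "Q = (\<Sum>a\<in>UNIV. \<Sum>b\<in>UNIV. dG None a b * N a * N b)"
  define M where "M = (\<Sum>b\<in>UNIV. dN None b * (\<Sum>a\<in>UNIV. G a b * N a))"
  have QM: "Q + 2 * M = 0"
  proof -
    have "(\<Sum>a\<in>UNIV. \<Sum>b\<in>UNIV. G a b * dN None a * N b) = (\<Sum>a\<in>UNIV. \<Sum>b\<in>UNIV. G a b * N a * dN None b)"
      by (rule sum2_swap_sym[OF Gsym])
    moreover have "M = (\<Sum>a\<in>UNIV. \<Sum>b\<in>UNIV. G a b * N a * dN None b)"
      unfolding M_def by (subst sum.swap) (simp add: sum_distrib_left sum_distrib_right algebra_simps)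
    ultimately show ?thesis using L0 unfolding Q_def by (simp add: sum.distrib)
  qed
  have Mpsi: "psi * ((\<Sum>i\<in>UNIV. dN None (Some i) * s i) - dN None None) = M"
  proof -
    have "M = dN None None * (\<Sum>a\<in>UNIV. G a None * N a) + (\<Sum>i\<in>UNIV. dN None (Some i) * (\<Sum>a\<in>UNIV. G a (Some i) * N a))"
      unfolding M_def by (rule sum_option)
    then have "M = dN None None * (\<Sum>a\<in>UNIV. G a None * N a) + (\<Sum>i\<in>UNIV. dN None (Some i) * (psi * s i))"
      by (simp only: Nn)
    then show ?thesis using psi by (simp add: algebra_simps sum_distrib_left)
  qed
  have SL: "(\<Sum>c\<in>UNIV. L c * N c) = kappa * psi - Q / 2"
  proof -
    define X where "X = (\<Sum>b\<in>UNIV. \<Sum>c\<in>UNIV. dG b None c * N b * N c)"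
    have e1: "(\<Sum>c\<in>UNIV. L c * N c) = - (\<Sum>c\<in>UNIV. \<Sum>a\<in>UNIV. dG c a None * N c * N a)
                 - (\<Sum>a\<in>UNIV. G a None * (\<Sum>c\<in>UNIV. N c * dN c a))"
    proof -
      have "(\<Sum>c\<in>UNIV. L c * N c) = - (\<Sum>c\<in>UNIV. \<Sum>a\<in>UNIV. dG c a None * N c * N a)
               - (\<Sum>c\<in>UNIV. \<Sum>a\<in>UNIV. G a None * dN c a * N c)"
        unfolding L by (simp add: sum_distrib_right sum_distrib_left sum.distrib sum_negf algebra_simps sum_subtractf)
      moreover have "(\<Sum>c\<in>UNIV. \<Sum>a\<in>UNIV. G a None * dN c a * N c) = (\<Sum>a\<in>UNIV. G a None * (\<Sum>c\<in>UNIV. N c * dN c a))"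
        by (subst sum.swap) (simp add: sum_distrib_left algebra_simps)
      ultimately show ?thesis by simp
    qed
    have e2: "(\<Sum>c\<in>UNIV. \<Sum>a\<in>UNIV. dG c a None * N c * N a) = X"
      unfolding X_def by (simp add: dGsym)
    have e3: "(\<Sum>a\<in>UNIV. G a None * (\<Sum>b\<in>UNIV. \<Sum>c\<in>UNIV. Gam a b c * N b * N c))
         = (\<Sum>b\<in>UNIV. \<Sum>c\<in>UNIV. (dG b None c + dG c None b - dG None b c) / 2 * N b * N c)"
    proof -
      have "(\<Sum>a\<in>UNIV. G a None * (\<Sum>b\<in>UNIV. \<Sum>c\<in>UNIV. Gam a b c * N b * N c))
          = (\<Sum>b\<in>UNIV. \<Sum>c\<in>UNIV. (\<Sum>a\<in>UNIV. G a None * Gam a b c) * N b * N c)"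
        by (simp add: sum_distrib_left sum_distrib_right algebra_simps)
           (subst sum.swap, rule sum.cong, simp, subst sum.swap, simp)
      then show ?thesis by (simp add: Low)
    qed
    have e4: "(\<Sum>b\<in>UNIV. \<Sum>c\<in>UNIV. (dG b None c + dG c None b - dG None b c) / 2 * N b * N c)
        = X - Q / 2"
    proof -
      have s1: "(\<Sum>b\<in>UNIV. \<Sum>c\<in>UNIV. dG c None b * N b * N c) = X"
        unfolding X_def by (subst sum.swap) (simp add: algebra_simps)
      have "(\<Sum>b\<in>UNIV. \<Sum>c\<in>UNIV. (dG b None c + dG c None b - dG None b c) / 2 * N b * N c)
          = ((\<Sum>b\<in>UNIV. \<Sum>c\<in>UNIV. dG b None c * N b * N c) + (\<Sum>b\<in>UNIV. \<Sum>c\<in>UNIV. dG c None b * N b * N c)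
             - (\<Sum>b\<in>UNIV. \<Sum>c\<in>UNIV. dG None b c * N b * N c)) / 2"
      proof -
        have "2 * (\<Sum>b\<in>UNIV. \<Sum>c\<in>UNIV. (dG b None c + dG c None b - dG None b c) / 2 * N b * N c)
           = (\<Sum>b\<in>UNIV. \<Sum>c\<in>UNIV. dG b None c * N b * N c + dG c None b * N b * N c - dG None b c * N b * N c)"
          unfolding sum_distrib_left by (intro sum.cong refl) (simp add: field_simps)
        also have "\<dots> = (\<Sum>b\<in>UNIV. \<Sum>c\<in>UNIV. dG b None c * N b * N c) + (\<Sum>b\<in>UNIV. \<Sum>c\<in>UNIV. dG c None b * N b * N c)
             - (\<Sum>b\<in>UNIV. \<Sum>c\<in>UNIV. dG None b c * N b * N c)"
          by (simp add: sum.distrib sum_subtractf)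
        finally show ?thesis by simp
      qed
      then show ?thesis using s1 unfolding X_def Q_def by simp
    qed
    have "(\<Sum>a\<in>UNIV. G a None * (\<Sum>c\<in>UNIV. N c * dN c a))
        = kappa * (\<Sum>a\<in>UNIV. G a None * N a) - (X - Q/2)"
      using Geo e3 e4 by (simp add: algebra_simps sum.distrib)
    then show ?thesis using e1 e2 psi by simp
  qed
  have SV: "(\<Sum>c\<in>UNIV. dvol c * N c) = vol * (\<Sum>a\<in>UNIV. \<Sum>b\<in>UNIV. Gam a a b * N b)"
    unfolding dvol by (subst sum.swap) (simp add: sum_distrib_left sum_distrib_right algebra_simps)
  have "LHS = (\<Sum>i\<in>UNIV. A (Some i) * N (Some i) + K * dN (Some i) (Some i)
                 + (A None * N (Some i) + K * dN None (Some i)) * s i)"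
    if "LHS = (\<Sum>i\<in>UNIV. (dphi (Some i) * N (Some i) + phi * dN (Some i) (Some i)) * vol / psi
                     + phi * N (Some i) * dvol (Some i) / psi - phi * N (Some i) * vol * L (Some i) / psi^2
                   + ((dphi None * N (Some i) + phi * dN None (Some i)) * vol / psi
                     + phi * N (Some i) * dvol None / psi - phi * N (Some i) * vol * L None / psi^2) * s i)" for LHS
    using that dF by simp
  then have step1: "(\<Sum>i\<in>UNIV. (dphi (Some i) * N (Some i) + phi * dN (Some i) (Some i)) * vol / psi
                     + phi * N (Some i) * dvol (Some i) / psi - phi * N (Some i) * vol * L (Some i) / psi^2
                   + ((dphi None * N (Some i) + phi * dN None (Some i)) * vol / psi
                     + phi * N (Some i) * dvol None / psi - phi * N (Some i) * vol * L None / psi^2) * s i)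
      = (\<Sum>i\<in>UNIV. A (Some i) * N (Some i) + K * dN (Some i) (Some i)
                 + (A None * N (Some i) + K * dN None (Some i)) * s i)" by blast
  also have "\<dots> = (\<Sum>i\<in>UNIV. A (Some i) * N (Some i)) + K * (\<Sum>i\<in>UNIV. dN (Some i) (Some i))
        + A None * (\<Sum>i\<in>UNIV. N (Some i) * s i) + K * (\<Sum>i\<in>UNIV. dN None (Some i) * s i)"
    by (simp add: sum.distrib sum_distrib_left algebra_simps)
  also have "\<dots> = (\<Sum>c\<in>UNIV. A c * N c) + K * (\<Sum>c\<in>UNIV. dN c c)
        + K * ((\<Sum>i\<in>UNIV. dN None (Some i) * s i) - dN None None)"
    using T by (simp add: sum_option algebra_simps mult.commute)
  also have "\<dots> = (\<Sum>c\<in>UNIV. A c * N c) + K * (\<Sum>c\<in>UNIV. dN c c) + K * M / psi"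
    using Mpsi psi0 by (simp add: field_simps)
  finally have LHS: "?LHS = (\<Sum>c\<in>UNIV. A c * N c) + K * (\<Sum>c\<in>UNIV. dN c c) + K * M / psi" .
  have SA: "(\<Sum>c\<in>UNIV. A c * N c) = ((\<Sum>c\<in>UNIV. N c * dphi c) * vol + phi * (\<Sum>c\<in>UNIV. dvol c * N c)) / psi
          - phi * vol * (\<Sum>c\<in>UNIV. L c * N c) / psi^2"
    unfolding A_def
    by (simp add: sum_subtractf sum.distrib sum_divide_distrib[symmetric] sum_distrib_left sum_distrib_right algebra_simps)
  have Mq: "M = - Q / 2" using QM by simp
  show ?thesis
    unfolding LHS SA SL SV K_def Mq using psi0
    by (simp add: field_simps power2_eq_square)
qed


abbreviation FD where "FD f p \<equiv> frechet_derivative f (at p)"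

lemma fd_works: "f differentiable (at p) \<Longrightarrow> (f has_derivative FD f p) (at p)"
  using frechet_derivative_works by blast

lemma fd_eq: "(f has_derivative f') (at p) \<Longrightarrow> FD f p v = f' v"
  using frechet_derivative_at by metis

lemma fd_add:
  fixes f g :: "'a::real_normed_vector \<Rightarrow> real"
  assumes "f differentiable (at p)" "g differentiable (at p)"
  shows "FD (\<lambda>q. f q + g q) p v = FD f p v + FD g p v"
  by (rule fd_eq) (intro has_derivative_add fd_works assms)

lemma fd_diff:
  fixes f g :: "'a::real_normed_vector \<Rightarrow> real"
  assumes "f differentiable (at p)" "g differentiable (at p)"
  shows "FD (\<lambda>q. f q - g q) p v = FD f p v - FD g p v"
  by (rule fd_eq) (intro has_derivative_diff fd_works assms)

lemma fd_minus:
  fixes f :: "'a::real_normed_vector \<Rightarrow> real"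
  assumes "f differentiable (at p)"
  shows "FD (\<lambda>q. - f q) p v = - FD f p v"
  by (rule fd_eq) (intro has_derivative_minus fd_works assms)

lemma fd_mult:
  fixes f g :: "'a::real_normed_vector \<Rightarrow> real"
  assumes "f differentiable (at p)" "g differentiable (at p)"
  shows "FD (\<lambda>q. f q * g q) p v = FD f p v * g p + f p * FD g p v"
proof -
  have "((\<lambda>q. f q * g q) has_derivative (\<lambda>v. f p * FD g p v + FD f p v * g p)) (at p)"
    by (intro has_derivative_mult fd_works assms)
  then show ?thesis by (simp add: fd_eq algebra_simps)
qed

lemma fd_divide:
  fixes f g :: "'a::real_normed_vector \<Rightarrow> real"
  assumes "f differentiable (at p)" "g differentiable (at p)" "g p \<noteq> 0"
  shows "FD (\<lambda>q. f q / g q) p v = FD f p v / g p - f p * FD g p v / (g p)^2"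
proof -
  have "((\<lambda>q. f q / g q) has_derivative (\<lambda>h. (FD f p h * g p - f p * FD g p h) / (g p * g p))) (at p)"
    by (intro has_derivative_divide' fd_works assms)
  then show ?thesis using assms(3) by (simp add: fd_eq field_simps power2_eq_square)
qed

lemma fd_sqrt:
  fixes f :: "'a::real_normed_vector \<Rightarrow> real"
  assumes "f differentiable (at p)" "f p > 0"
  shows "FD (\<lambda>q. sqrt (f q)) p v = FD f p v / (2 * sqrt (f p))"
    and "(\<lambda>q. sqrt (f q)) differentiable (at p)"
proof -
  have h: "((\<lambda>q. sqrt (f q)) has_derivative (\<lambda>v. FD f p v * (inverse (sqrt (f p)) / 2))) (at p)"
    by (rule DERIV_compose_FDERIV[OF DERIV_real_sqrt[OF assms(2)] fd_works[OF assms(1)]])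
  then show "FD (\<lambda>q. sqrt (f q)) p v = FD f p v / (2 * sqrt (f p))"
    by (simp add: fd_eq field_simps)
  from h show "(\<lambda>q. sqrt (f q)) differentiable (at p)" unfolding differentiable_def by blast
qed

lemma fd_sum:
  fixes f :: "'i \<Rightarrow> 'a::real_normed_vector \<Rightarrow> real"
  assumes "finite I" "\<forall>i\<in>I. f i differentiable (at p)"
  shows "FD (\<lambda>q. \<Sum>i\<in>I. f i q) p v = (\<Sum>i\<in>I. FD (f i) p v)"
proof -
  have "((\<lambda>q. \<Sum>i\<in>I. f i q) has_derivative (\<lambda>v. \<Sum>i\<in>I. FD (f i) p v)) (at p)"
    using assms by (intro has_derivative_sum fd_works) auto
  then show ?thesis by (simp add: fd_eq)
qed

lemma fd_const: "FD (\<lambda>q. c) p v = (0::real)"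
  by (rule fd_eq) (rule has_derivative_const)

lemma fd_local:
  assumes "f differentiable (at p)" "open S" "p \<in> S" "\<And>q. q \<in> S \<Longrightarrow> f q = g q"
  shows "FD g p = FD f p" and "g differentiable (at p)"
proof -
  have h: "(g has_derivative FD f p) (at p)"
    using has_derivative_transform_within_open[OF fd_works[OF assms(1)] assms(2,3)] assms(4) by blast
  then show "FD g p = FD f p" using frechet_derivative_at by metis
  from h show "g differentiable (at p)" unfolding differentiable_def by blast
qed

lemma fd_zero_local:
  assumes "f differentiable (at p)" "open S" "p \<in> S" "\<And>q. q \<in> S \<Longrightarrow> f q = (0::real)"
  shows "FD f p v = 0"
proof -
  have "FD f p = FD (\<lambda>q. 0::real) p"
    using fd_local(1)[of "\<lambda>q. 0::real" p S f] assms by simp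
  then show ?thesis by (simp add: fd_const)
qed

lemma fd_det:
  fixes A :: "'a::real_normed_vector \<Rightarrow> real^'m::finite^'m"
  assumes d: "\<And>a b. (\<lambda>q. A q $ a $ b) differentiable (at p)"
  shows "(\<lambda>q. det (A q)) differentiable (at p)"
    and "FD (\<lambda>q. det (A q)) p v =
      (\<Sum>k\<in>UNIV. det (\<chi> i. if i = k then (\<chi> l. FD (\<lambda>q. A q $ k $ l) p v) else A p $ i))"
proof -
  let ?P = "{\<sigma>. \<sigma> permutes (UNIV::'m set)}"
  have fin: "finite ?P" by (rule finite_permutations) simp
  have h: "((\<lambda>q. det (A q)) has_derivative
     (\<lambda>v. \<Sum>\<sigma>\<in>?P. of_int (sign \<sigma>) * (\<Sum>i\<in>UNIV. FD (\<lambda>q. A q $ i $ \<sigma> i) p v *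
            (\<Prod>j\<in>UNIV - {i}. A p $ j $ \<sigma> j)))) (at p)"
    unfolding det_def
    by (intro has_derivative_sum has_derivative_mult_right has_derivative_prod fd_works d)
  then show "(\<lambda>q. det (A q)) differentiable (at p)" unfolding differentiable_def by blast
  have "FD (\<lambda>q. det (A q)) p v = (\<Sum>\<sigma>\<in>?P. of_int (sign \<sigma>) * (\<Sum>i\<in>UNIV. FD (\<lambda>q. A q $ i $ \<sigma> i) p v *
            (\<Prod>j\<in>UNIV - {i}. A p $ j $ \<sigma> j)))"
    using fd_eq[OF h] .
  also have "\<dots> = (\<Sum>k\<in>UNIV. \<Sum>\<sigma>\<in>?P. of_int (sign \<sigma>) *
          (\<Prod>j\<in>UNIV. (\<chi> i. if i = k then (\<chi> l. FD (\<lambda>q. A q $ k $ l) p v) else A p $ i) $ j $ \<sigma> j))"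
  proof -
    have "\<And>\<sigma> k. (\<Prod>j\<in>UNIV. (\<chi> i. if i = k then (\<chi> l. FD (\<lambda>q. A q $ k $ l) p v) else A p $ i) $ j $ \<sigma> j)
          = FD (\<lambda>q. A q $ k $ \<sigma> k) p v * (\<Prod>j\<in>UNIV - {k}. A p $ j $ \<sigma> j)"
    proof -
      fix \<sigma> k
      have "(\<Prod>j\<in>UNIV. (\<chi> i. if i = k then (\<chi> l. FD (\<lambda>q. A q $ k $ l) p v) else A p $ i) $ j $ \<sigma> j)
        = (\<chi> i. if i = k then (\<chi> l. FD (\<lambda>q. A q $ k $ l) p v) else A p $ i) $ k $ \<sigma> k *
          (\<Prod>j\<in>UNIV - {k}. (\<chi> i. if i = k then (\<chi> l. FD (\<lambda>q. A q $ k $ l) p v) else A p $ i) $ j $ \<sigma> j)"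
        by (rule prod.remove) auto
      also have "(\<Prod>j\<in>UNIV - {k}. (\<chi> i. if i = k then (\<chi> l. FD (\<lambda>q. A q $ k $ l) p v) else A p $ i) $ j $ \<sigma> j)
          = (\<Prod>j\<in>UNIV - {k}. A p $ j $ \<sigma> j)"
        by (rule prod.cong) auto
      finally show "?thesis \<sigma> k" by simp
    qed
    then show ?thesis
      by (subst sum.swap) (simp add: sum_distrib_left algebra_simps)
  qed
  also have "\<dots> = (\<Sum>k\<in>UNIV. det (\<chi> i. if i = k then (\<chi> l. FD (\<lambda>q. A q $ k $ l) p v) else A p $ i))"
    unfolding det_def ..
  finally show "FD (\<lambda>q. det (A q)) p v =
      (\<Sum>k\<in>UNIV. det (\<chi> i. if i = k then (\<chi> l. FD (\<lambda>q. A q $ k $ l) p v) else A p $ i))" .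
qed

lemma det_row_replace:
  fixes A :: "real^'m::finite^'m"
  assumes "det A \<noteq> 0"
  shows "det (\<chi> i. if i = k then r else A $ i) = det A * (\<Sum>l\<in>UNIV. r $ l * matrix_inv A $ l $ k)"
proof -
  define x where "x = (\<chi> m. \<Sum>l\<in>UNIV. r $ l * matrix_inv A $ l $ m)"
  have inv: "matrix_inv A ** A = mat 1" using inv_props(2)[OF assms] .
  have r: "r = (\<Sum>i\<in>UNIV. x$i *s row i A)"
  proof -
    have "\<And>j. (\<Sum>i\<in>UNIV. x$i * A$i$j) = r $ j"
    proof -
      fix j
      have "(\<Sum>i\<in>UNIV. x$i * A$i$j) = (\<Sum>l\<in>UNIV. r $ l * (\<Sum>i\<in>UNIV. matrix_inv A $ l $ i * A $ i $ j))"
        unfolding x_def by (simp add: sum_distrib_left sum_distrib_right algebra_simps) (subst sum.swap, simp)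
      also have "\<dots> = (\<Sum>l\<in>UNIV. r $ l * mat 1 $ l $ j)"
        using inv by (simp add: matrix_matrix_mult_def vec_eq_iff)
      also have "\<dots> = r $ j" by (simp add: mat_def if_distrib cong: if_cong)
      finally show "?thesis j" .
    qed
    then show ?thesis by (simp add: vec_eq_iff row_def)
  qed
  have rowA: "\<And>i. row i A = A $ i" by (simp add: row_def vec_eq_iff)
  have "det (\<chi> i. if i = k then r else A $ i) = det (\<chi> i. if i = k then (\<Sum>i\<in>UNIV. x$i *s row i A) else row i A)"
    by (simp only: rowA r[unfolded rowA, symmetric])
  also have "\<dots> = x $ k * det A" by (rule cramer_lemma_transpose)
  finally show ?thesis unfolding x_def by simp
qed

lemma fd_det_inv:
  fixes A :: "'a::real_normed_vector \<Rightarrow> real^'m::finite^'m"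
  assumes d: "\<And>a b. (\<lambda>q. A q $ a $ b) differentiable (at p)" and nz: "det (A p) \<noteq> 0"
  shows "FD (\<lambda>q. det (A q)) p v =
      det (A p) * (\<Sum>k\<in>UNIV. \<Sum>l\<in>UNIV. FD (\<lambda>q. A q $ k $ l) p v * matrix_inv (A p) $ l $ k)"
  unfolding fd_det(2)[OF d] det_row_replace[OF nz] by (simp add: sum_distrib_left)


lemma linear_pair:
  fixes f :: "real \<times> 'b::real_vector \<Rightarrow> real" and a :: real
  assumes "linear f"
  shows "f (a, w) = a * f (1, 0) + f (0, w)"
proof -
  have "(a, w) = a *\<^sub>R (1, 0) + (0, w)" by simp
  then have "f (a, w) = f (a *\<^sub>R (1, 0)) + f (0, w)" using linear_add[OF assms] by metis
  moreover have "f (a *\<^sub>R (1::real, 0::'b)) = a * f (1, 0)" using linear_scale[OF assms, of a "(1::real, 0::'b)"] by simp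
  ultimately show ?thesis by simp
qed

lemma vec_axis_expand: "(w::real^'n::finite) = (\<Sum>j\<in>UNIV. w $ j *\<^sub>R axis j 1)"
  by (simp add: vec_eq_iff axis_def if_distrib cong: if_cong)

lemma linear_axis:
  assumes "linear f"
  shows "f (w::real^'n::finite) = (\<Sum>j\<in>UNIV. w $ j * f (axis j (1::real)))"
proof -
  have "f w = f (\<Sum>j\<in>UNIV. w $ j *\<^sub>R axis j 1)" using vec_axis_expand by metis
  also have "\<dots> = (\<Sum>j\<in>UNIV. w $ j *\<^sub>R f (axis j 1))"
    using linear_sum[OF assms, of "\<lambda>j. w $ j *\<^sub>R axis j 1" UNIV] linear_scale[OF assms] by simp
  finally show ?thesis by simp
qed

lemma graph_chain:
  fixes F :: "real \<times> (real^'n::finite) \<Rightarrow> real"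
  assumes F: "F differentiable (at (h x, x))" and hd: "h differentiable (at x)"
  shows "(\<lambda>y. F (h y, y)) differentiable (at x)"
    and "spd i (\<lambda>y. F (h y, y)) x = pd (Some i) F (h x, x) + pd None F (h x, x) * spd i h x"
proof -
  have g: "((\<lambda>y. (h y, y)) has_derivative (\<lambda>w. (FD h x w, w))) (at x)"
    by (intro has_derivative_Pair fd_works hd has_derivative_ident)
  have c: "((F \<circ> (\<lambda>y. (h y, y))) has_derivative (FD F (h x, x) \<circ> (\<lambda>w. (FD h x w, w)))) (at x)"
    by (rule diff_chain_at[OF g fd_works[OF F]])
  then have c': "((\<lambda>y. F (h y, y)) has_derivative (\<lambda>w. FD F (h x, x) (FD h x w, w))) (at x)"
    by (simp add: o_def)
  then show "(\<lambda>y. F (h y, y)) differentiable (at x)" unfolding differentiable_def by blast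
  have lin: "linear (FD F (h x, x))" using F linear_frechet_derivative by blast
  show "spd i (\<lambda>y. F (h y, y)) x = pd (Some i) F (h x, x) + pd None F (h x, x) * spd i h x"
    unfolding spd_def pd_def fd_eq[OF c'] ev_def
    using linear_pair[OF lin, of "FD h x (axis i 1)" "axis i 1"] by simp
qed

lemma gnV_eq: "gform M v (axis None 1) = (\<Sum>a\<in>UNIV. M $ a $ None * v $ a)"
  unfolding gform_def
  by (rule sum.cong) (simp_all add: axis_def if_distrib cong: if_cong)

lemma Ck_diff: "Ck (Suc k) U f \<Longrightarrow> x \<in> U \<Longrightarrow> f differentiable (at x)"
  by simp

lemma gform_expand: "gform M v u = (\<Sum>a\<in>UNIV. M $ a $ None * v $ a * u $ None)
    + (\<Sum>j\<in>UNIV. \<Sum>a\<in>UNIV. M $ a $ Some j * v $ a * u $ Some j)"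
  unfolding gform_def sum_option[of "\<lambda>b. _ b"]
  by (simp add: sum.distrib) (subst sum.swap, rule refl)


lemma inv_left_comp:
  fixes A :: "real^'m::finite^'m"
  assumes "det A \<noteq> 0"
  shows "(\<Sum>k\<in>UNIV. matrix_inv A $ i $ k * A $ k $ j) = (if i = j then 1 else 0)"
proof -
  have "(matrix_inv A ** A) $ i $ j = mat 1 $ i $ j" using inv_props(2)[OF assms] by simp
  then show ?thesis by (simp add: matrix_matrix_mult_def mat_def)
qed

lemma inv_right_comp:
  fixes A :: "real^'m::finite^'m"
  assumes "det A \<noteq> 0"
  shows "(\<Sum>k\<in>UNIV. A $ i $ k * matrix_inv A $ k $ j) = (if i = j then 1 else 0)"
proof -
  have "(A ** matrix_inv A) $ i $ j = mat 1 $ i $ j" using inv_props(1)[OF assms] by simp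
  then show ?thesis by (simp add: matrix_matrix_mult_def mat_def)
qed

locale mt9 =
  fixes g :: "real \<times> (real^'n::finite) \<Rightarrow> real^('n option)^('n option)"
    and U :: "(real \<times> (real^'n)) set"
    and Om :: "(real^'n) set"
    and h :: "real^'n \<Rightarrow> real"
    and nf :: "real \<times> (real^'n) \<Rightarrow> real^('n option)"
    and kappa :: "real \<times> (real^'n) \<Rightarrow> real"
  assumes U_open: "open U"
    and Om_open: "open Om"
    and graph_in_U: "\<forall>x\<in>Om. (h x, x) \<in> U"
    and g_C3: "\<forall>a b. Ck 3 U (\<lambda>p. g p $ a $ b)"
    and g_lorentz: "\<forall>p\<in>U. lorentzian (g p)"
    and h_C2: "Ck 2 Om h"
    and H_null: "\<forall>x\<in>Om. null_graph g h x"
    and n_C1: "\<forall>a. Ck 1 U (\<lambda>p. nf p $ a)"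
    and n_lightlike: "\<forall>p\<in>U. gform (g p) (nf p) (nf p) = 0"
    and n_future: "\<forall>p\<in>U. gnV g nf p < 0"
    and n_tangent: "\<forall>x\<in>Om. graph_tangent h x (nf (h x, x))"
    and n_geodesic: "\<forall>p\<in>U. covd g nf nf p = kappa p *\<^sub>R nf p"

context mt9
begin

lemma dg: "p \<in> U \<Longrightarrow> (\<lambda>q. g q $ a $ b) differentiable (at p)"
  using g_C3 by (simp add: numeral_eq_Suc)

lemma dn: "p \<in> U \<Longrightarrow> (\<lambda>q. nf q $ a) differentiable (at p)"
  using n_C1 by simp

lemma dh: "x \<in> Om \<Longrightarrow> h differentiable (at x)"
  using h_C2 by (simp add: numeral_eq_Suc)

lemma gT: "p \<in> U \<Longrightarrow> transpose (g p) = g p"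
  using g_lorentz unfolding lorentzian_def by blast

lemma Gsym: 
  assumes "p \<in> U" shows "g p $ a $ b = g p $ b $ a"
proof -
  have "transpose (g p) $ b $ a = g p $ a $ b" by (simp add: transpose_def)
  then show ?thesis using gT[OF assms] by simp
qed

lemma detneg: "p \<in> U \<Longrightarrow> det (g p) < 0"
  using g_lorentz lorentz_det by blast

lemma det0: "p \<in> U \<Longrightarrow> det (g p) \<noteq> 0"
  using detneg by (metis less_irrefl)

lemma ginv_sym: 
  assumes "p \<in> U" shows "ginv g p $ a $ b = ginv g p $ b $ a"
proof -
  have "transpose (matrix_inv (g p)) $ b $ a = matrix_inv (g p) $ a $ b" by (simp add: transpose_def)
  then show ?thesis using inv_sym[OF det0[OF assms] gT[OF assms]] unfolding ginv_def by simp
qed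

lemma dGsym: "p \<in> U \<Longrightarrow> pd c (\<lambda>q. g q $ a $ b) p = pd c (\<lambda>q. g q $ b $ a) p"
  unfolding pd_def using fd_local(1)[OF dg U_open, of p a b "\<lambda>q. g q $ b $ a"] Gsym by auto

lemma psi_eq: "gnV g nf q = (\<Sum>a\<in>UNIV. g q $ a $ None * nf q $ a)"
  unfolding gnV_def by (rule gnV_eq)

lemma Nn:
  assumes x: "x \<in> Om"
  shows "(\<Sum>a\<in>UNIV. g (h x, x) $ a $ Some i * nf (h x, x) $ a) = - gnV g nf (h x, x) * spd i h x"
proof -
  let ?p = "(h x, x)"
  have pU: "?p \<in> U" using graph_in_U x by blast
  obtain v where vt: "graph_tangent h x v" and v0: "v \<noteq> 0"
    and vo: "\<forall>u. graph_tangent h x u \<longrightarrow> gform (g ?p) v u = 0"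
    using H_null x unfolding null_graph_def by blast
  have Nt: "graph_tangent h x (nf ?p)" using n_tangent x by blast
  have "\<exists>c. nf ?p = c *\<^sub>R v"
    by (rule lorentz_parallel[OF _ v0]) (use g_lorentz pU vo vt Nt n_lightlike in auto)
  then obtain c where c: "nf ?p = c *\<^sub>R v" by blast
  define u :: "real^('n option)" where "u = (\<chi> a. case a of None \<Rightarrow> spd i h x | Some j \<Rightarrow> axis i 1 $ j)"
  have ut: "graph_tangent h x u"
    unfolding graph_tangent_def u_def spd_def by (intro exI[of _ "axis i 1"]) simp
  have "gform (g ?p) (nf ?p) u = 0" unfolding c gform_scale1 using vo ut by simp
  moreover have "gform (g ?p) (nf ?p) u = (\<Sum>a\<in>UNIV. g ?p $ a $ None * nf ?p $ a) * spd i h x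
       + (\<Sum>a\<in>UNIV. g ?p $ a $ Some i * nf ?p $ a)"
  proof -
    have "(\<Sum>j\<in>UNIV. \<Sum>a\<in>UNIV. g ?p $ a $ Some j * nf ?p $ a * u $ Some j)
          = (\<Sum>j\<in>UNIV. if j = i then (\<Sum>a\<in>UNIV. g ?p $ a $ Some j * nf ?p $ a) else 0)"
      by (rule sum.cong) (auto simp: u_def axis_def)
    then show ?thesis unfolding gform_expand
      by (simp add: u_def sum_distrib_right)
  qed
  ultimately have e: "(\<Sum>a\<in>UNIV. g ?p $ a $ None * nf ?p $ a) * spd i h x
       + (\<Sum>a\<in>UNIV. g ?p $ a $ Some i * nf ?p $ a) = 0" by linarith
  then have "(\<Sum>a\<in>UNIV. g ?p $ a $ Some i * nf ?p $ a) = - ((\<Sum>a\<in>UNIV. g ?p $ a $ None * nf ?p $ a) * spd i h x)"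
    by linarith
  then show ?thesis unfolding psi_eq by simp
qed

lemma bracket_eq:
  assumes x: "x \<in> Om"
  shows "bracket g h i x = nf (h x, x) $ Some i / (- gnV g nf (h x, x))"
proof -
  let ?p = "(h x, x)"
  have pU: "?p \<in> U" using graph_in_U x by blast
  define psi where "psi = - gnV g nf ?p"
  have psi0: "psi \<noteq> 0" using n_future pU psi_def by force
  define w where "w b = (\<Sum>a\<in>UNIV. g ?p $ a $ b * nf ?p $ a) / psi" for b
  have wN: "w None = -1" unfolding w_def psi_def psi_eq using psi0 psi_def psi_eq by simp
  have wS: "w (Some j) = spd j h x" for j unfolding w_def using Nn[OF x] psi0 psi_def by simp
  have "bracket g h i x = (\<Sum>b\<in>UNIV. ginv g ?p $ Some i $ b * w b)"
    unfolding bracket_def sum_option wN wS by simp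
  also have "\<dots> = (\<Sum>a\<in>UNIV. nf ?p $ a * (\<Sum>b\<in>UNIV. ginv g ?p $ Some i $ b * g ?p $ b $ a)) / psi"
    unfolding w_def using Gsym[OF pU]
    by (simp add: sum_distrib_left sum_divide_distrib algebra_simps) (subst sum.swap, simp)
  also have "\<dots> = (\<Sum>a\<in>UNIV. nf ?p $ a * (if Some i = a then 1 else 0)) / psi"
    using inv_left_comp[OF det0[OF pU]] unfolding ginv_def by simp
  also have "\<dots> = nf ?p $ Some i / psi"
    by (simp add: if_distrib cong: if_cong)
  finally show ?thesis unfolding psi_def .
qed

end


context mt9
begin

lemma T_formula:
  assumes x: "x \<in> Om"
  shows "nf (h x, x) $ None = (\<Sum>i\<in>UNIV. nf (h x, x) $ Some i * spd i h x)"
proof -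
  obtain w where w1: "nf (h x, x) $ None = FD h x w" and w2: "\<forall>j. nf (h x, x) $ Some j = w $ j"
    using n_tangent x unfolding graph_tangent_def by blast
  have lin: "linear (FD h x)" using dh[OF x] linear_frechet_derivative by blast
  show ?thesis unfolding w1 linear_axis[OF lin, of w] spd_def using w2 by simp
qed

lemma L0_formula:
  assumes pU: "p \<in> U"
  shows "(\<Sum>a\<in>UNIV. \<Sum>b\<in>UNIV. pd None (\<lambda>q. g q $ a $ b) p * nf p $ a * nf p $ b
      + g p $ a $ b * pd None (\<lambda>q. nf q $ a) p * nf p $ b
      + g p $ a $ b * nf p $ a * pd None (\<lambda>q. nf q $ b) p) = 0"
proof -
  let ?f = "\<lambda>q. \<Sum>a\<in>UNIV. \<Sum>b\<in>UNIV. g q $ a $ b * nf q $ a * nf q $ b"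
  have d1: "\<And>a b. (\<lambda>q. g q $ a $ b * nf q $ a) differentiable (at p)"
    using dg[OF pU] dn[OF pU] by simp
  have d2: "\<And>a b. (\<lambda>q. g q $ a $ b * nf q $ a * nf q $ b) differentiable (at p)"
    using d1 dn[OF pU] by simp
  have d3: "\<And>a. (\<lambda>q. \<Sum>b\<in>UNIV. g q $ a $ b * nf q $ a * nf q $ b) differentiable (at p)"
    using d2 by (intro differentiable_sum) auto
  have df: "?f differentiable (at p)" using d3 by (intro differentiable_sum) auto
  have "FD ?f p (ev None) = 0"
    by (rule fd_zero_local[OF df U_open pU]) (use n_lightlike in \<open>simp add: gform_def\<close>)
  moreover have "FD ?f p (ev None) = (\<Sum>a\<in>UNIV. \<Sum>b\<in>UNIV. pd None (\<lambda>q. g q $ a $ b) p * nf p $ a * nf p $ b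
      + g p $ a $ b * pd None (\<lambda>q. nf q $ a) p * nf p $ b
      + g p $ a $ b * nf p $ a * pd None (\<lambda>q. nf q $ b) p)"
  proof -
    have s1: "FD ?f p (ev None) = (\<Sum>a\<in>UNIV. FD (\<lambda>q. \<Sum>b\<in>UNIV. g q $ a $ b * nf q $ a * nf q $ b) p (ev None))"
      by (rule fd_sum) (auto intro: d3)
    have s2: "\<And>a. FD (\<lambda>q. \<Sum>b\<in>UNIV. g q $ a $ b * nf q $ a * nf q $ b) p (ev None)
         = (\<Sum>b\<in>UNIV. FD (\<lambda>q. g q $ a $ b * nf q $ a * nf q $ b) p (ev None))"
      by (rule fd_sum) (auto intro: d2)
    show ?thesis unfolding s1 s2 fd_mult[OF d1 dn[OF pU]] fd_mult[OF dg[OF pU] dn[OF pU]] pd_def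
      by (simp add: algebra_simps)
  qed
  ultimately show ?thesis by simp
qed

lemma Geo_formula:
  assumes pU: "p \<in> U"
  shows "(\<Sum>a\<in>UNIV. g p $ a $ None * ((\<Sum>b\<in>UNIV. nf p $ b * pd b (\<lambda>q. nf q $ a) p)
            + (\<Sum>b\<in>UNIV. \<Sum>c\<in>UNIV. christoffel g a b c p * nf p $ b * nf p $ c)))
         = kappa p * (\<Sum>a\<in>UNIV. g p $ a $ None * nf p $ a)"
proof -
  have "\<And>a. (\<Sum>b\<in>UNIV. nf p $ b * pd b (\<lambda>q. nf q $ a) p)
            + (\<Sum>b\<in>UNIV. \<Sum>c\<in>UNIV. christoffel g a b c p * nf p $ b * nf p $ c) = kappa p * nf p $ a"
  proof -
    fix a
    have "covd g nf nf p $ a = (kappa p *\<^sub>R nf p) $ a" using n_geodesic pU by simp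
    then show "?thesis a" unfolding covd_def by simp
  qed
  then show ?thesis by (simp add: sum_distrib_left algebra_simps)
qed

lemma Low_formula:
  assumes pU: "p \<in> U"
  shows "(\<Sum>a\<in>UNIV. g p $ a $ None * christoffel g a b c p)
     = (pd b (\<lambda>q. g q $ None $ c) p + pd c (\<lambda>q. g q $ None $ b) p - pd None (\<lambda>q. g q $ b $ c) p) / 2"
proof -
  define E where "E s = pd b (\<lambda>q. g q $ s $ c) p + pd c (\<lambda>q. g q $ s $ b) p - pd s (\<lambda>q. g q $ b $ c) p" for s
  have "(\<Sum>a\<in>UNIV. g p $ a $ None * christoffel g a b c p)
      = (1/2) * (\<Sum>s\<in>UNIV. (\<Sum>a\<in>UNIV. g p $ None $ a * ginv g p $ a $ s) * E s)"
    unfolding christoffel_def E_def[symmetric] using Gsym[OF pU]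
    by (simp add: sum_distrib_left sum_distrib_right algebra_simps) (subst sum.swap, simp)
  also have "\<dots> = (1/2) * E None"
  proof -
    have e: "\<And>s. (\<Sum>a\<in>UNIV. g p $ None $ a * ginv g p $ a $ s) = (if None = s then 1 else 0)"
      using inv_right_comp[OF det0[OF pU]] unfolding ginv_def by blast
    have "(\<Sum>s\<in>UNIV. (\<Sum>a\<in>UNIV. g p $ None $ a * ginv g p $ a $ s) * E s)
        = (\<Sum>s\<in>UNIV. (if None = s then 1 else 0) * E s)"
      by (intro sum.cong refl) (subst e, rule refl)
    also have "\<dots> = (\<Sum>s\<in>UNIV. if None = s then E s else 0)"
      by (intro sum.cong refl) simp
    also have "\<dots> = E None" by (simp only: sum.delta' finite UNIV_I if_True)
    finally show ?thesis by simp
  qed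
  finally show ?thesis unfolding E_def by simp
qed

lemma christ_trace:
  assumes pU: "p \<in> U"
  shows "(\<Sum>a\<in>UNIV. christoffel g a a c p)
     = (1/2) * (\<Sum>k\<in>UNIV. \<Sum>l\<in>UNIV. pd c (\<lambda>q. g q $ k $ l) p * ginv g p $ l $ k)"
proof -
  have A: "(\<Sum>a\<in>UNIV. \<Sum>s\<in>UNIV. ginv g p $ a $ s * pd a (\<lambda>q. g q $ s $ c) p)
        = (\<Sum>a\<in>UNIV. \<Sum>s\<in>UNIV. ginv g p $ a $ s * pd s (\<lambda>q. g q $ a $ c) p)"
    by (subst sum.swap) (simp add: ginv_sym[OF pU])
  have B: "(\<Sum>a\<in>UNIV. \<Sum>s\<in>UNIV. ginv g p $ a $ s * pd c (\<lambda>q. g q $ s $ a) p)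
        = (\<Sum>k\<in>UNIV. \<Sum>l\<in>UNIV. pd c (\<lambda>q. g q $ k $ l) p * ginv g p $ l $ k)"
    by (subst sum.swap) (simp add: mult.commute)
  have "(\<Sum>a\<in>UNIV. christoffel g a a c p) = (1/2) * ((\<Sum>a\<in>UNIV. \<Sum>s\<in>UNIV. ginv g p $ a $ s * pd a (\<lambda>q. g q $ s $ c) p)
     + (\<Sum>a\<in>UNIV. \<Sum>s\<in>UNIV. ginv g p $ a $ s * pd c (\<lambda>q. g q $ s $ a) p)
     - (\<Sum>a\<in>UNIV. \<Sum>s\<in>UNIV. ginv g p $ a $ s * pd s (\<lambda>q. g q $ a $ c) p))"
    unfolding christoffel_def
    by (simp add: sum_distrib_left[symmetric] sum.distrib sum_subtractf algebra_simps sum_divide_distrib)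
  then show ?thesis unfolding A B by simp
qed

end


lemma sqrt_aux:
  fixes s d T :: real
  assumes "s > 0" "s * s = - d"
  shows "- (d * T) / (2 * s) = s * (T / 2)"
proof -
  have "- (d * T) = s * s * T" using assms(2) by simp
  then show ?thesis using assms(1) by (simp add: field_simps)
qed

context mt9
begin

lemma dvol_formula:
  assumes pU: "p \<in> U"
  shows "(\<lambda>q. sqrt (- det (g q))) differentiable (at p)"
    and "pd c (\<lambda>q. sqrt (- det (g q))) p = sqrt (- det (g p)) * (\<Sum>a\<in>UNIV. christoffel g a a c p)"
proof -
  have dgp: "\<And>a b. (\<lambda>q. g q $ a $ b) differentiable (at p)" using dg[OF pU] .
  have dd: "(\<lambda>q. det (g q)) differentiable (at p)" by (rule fd_det(1)[OF dgp])
  have dm: "(\<lambda>q. - det (g q)) differentiable (at p)" using dd by simp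
  have pos: "- det (g p) > 0" using detneg[OF pU] by simp
  show "(\<lambda>q. sqrt (- det (g q))) differentiable (at p)" by (rule fd_sqrt(2)[OF dm pos])
  define T where "T = (\<Sum>k\<in>UNIV. \<Sum>l\<in>UNIV. FD (\<lambda>q. g q $ k $ l) p (ev c) * matrix_inv (g p) $ l $ k)"
  have "pd c (\<lambda>q. sqrt (- det (g q))) p = - (det (g p) * T) / (2 * sqrt (- det (g p)))"
    unfolding pd_def fd_sqrt(1)[OF dm pos] fd_minus[OF dd] fd_det_inv[OF dgp det0[OF pU]] T_def ..
  moreover have "(\<Sum>a\<in>UNIV. christoffel g a a c p) = T / 2"
    unfolding christ_trace[OF pU] T_def pd_def ginv_def by simp
  moreover have "sqrt (- det (g p)) * sqrt (- det (g p)) = - det (g p)" using pos by simp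
  moreover have "sqrt (- det (g p)) > 0" using pos by simp
  ultimately show "pd c (\<lambda>q. sqrt (- det (g q))) p = sqrt (- det (g p)) * (\<Sum>a\<in>UNIV. christoffel g a a c p)"
    using sqrt_aux by metis
qed

lemma psi_formula:
  assumes pU: "p \<in> U"
  shows "(\<lambda>q. - (\<Sum>a\<in>UNIV. g q $ a $ None * nf q $ a)) differentiable (at p)"
    and "pd c (\<lambda>q. - (\<Sum>a\<in>UNIV. g q $ a $ None * nf q $ a)) p
       = - (\<Sum>a\<in>UNIV. pd c (\<lambda>q. g q $ a $ None) p * nf p $ a + g p $ a $ None * pd c (\<lambda>q. nf q $ a) p)"
proof -
  have d1: "\<And>a. (\<lambda>q. g q $ a $ None * nf q $ a) differentiable (at p)"
    using dg[OF pU] dn[OF pU] by simp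
  have d2: "(\<lambda>q. \<Sum>a\<in>UNIV. g q $ a $ None * nf q $ a) differentiable (at p)"
    using d1 by (intro differentiable_sum) auto
  then show "(\<lambda>q. - (\<Sum>a\<in>UNIV. g q $ a $ None * nf q $ a)) differentiable (at p)" by simp
  show "pd c (\<lambda>q. - (\<Sum>a\<in>UNIV. g q $ a $ None * nf q $ a)) p
       = - (\<Sum>a\<in>UNIV. pd c (\<lambda>q. g q $ a $ None) p * nf p $ a + g p $ a $ None * pd c (\<lambda>q. nf q $ a) p)"
  proof -
    have s: "FD (\<lambda>q. \<Sum>a\<in>UNIV. g q $ a $ None * nf q $ a) p (ev c) = (\<Sum>a\<in>UNIV. FD (\<lambda>q. g q $ a $ None * nf q $ a) p (ev c))"
      by (rule fd_sum) (auto intro: d1)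
    show ?thesis unfolding pd_def fd_minus[OF d2] s
      by (simp add: fd_mult[OF dg[OF pU] dn[OF pU]])
  qed
qed

end


context mt9
begin

lemma core:
  assumes x: "x \<in> Om" and phid: "\<forall>p\<in>U. phi differentiable (at p)"
  shows "\<forall>i. (\<lambda>y. phi (h y, y) * nf (h y, y) $ Some i * volH g h y / (- gnV g nf (h y, y)))
                differentiable (at x)"
    and "(\<Sum>i\<in>UNIV. spd i (\<lambda>y. phi (h y, y) * nf (h y, y) $ Some i * volH g h y / (- gnV g nf (h y, y))) x)
          = (phi (h x, x) * thetaH g h nf kappa x + dirderiv nf phi (h x, x)) * volH g h x / (- gnV g nf (h x, x))"
proof -
  define p where "p = (h x, x)"
  have pU: "p \<in> U" using graph_in_U x p_def by blast
  define volF where "volF q = sqrt (- det (g q))" for q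
  define psiF where "psiF q = - (\<Sum>a\<in>UNIV. g q $ a $ None * nf q $ a)" for q
  have psiF_eq: "\<And>q. - gnV g nf q = psiF q" by (simp add: psiF_def psi_eq)
  define F where "F i q = phi q * nf q $ Some i * volF q / psiF q" for i q
  have Feq: "\<And>i. (\<lambda>y. phi (h y, y) * nf (h y, y) $ Some i * volH g h y / (- gnV g nf (h y, y)))
       = (\<lambda>y. F i (h y, y))"
    by (simp add: F_def volH_def volF_def psiF_eq)
  have dphi: "phi differentiable (at p)" using phid pU by blast
  have dvolF: "volF differentiable (at p)"
    unfolding volF_def[abs_def] by (rule dvol_formula(1)[OF pU])
  have dpsiF: "psiF differentiable (at p)"
    unfolding psiF_def[abs_def] by (rule psi_formula(1)[OF pU])
  have psi0: "psiF p \<noteq> 0" using n_future pU psiF_eq by (metis neg_0_less_iff_less less_irrefl)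
  have d1: "\<And>i. (\<lambda>q. phi q * nf q $ Some i) differentiable (at p)"
    using dphi dn[OF pU] by simp
  have d2: "\<And>i. (\<lambda>q. phi q * nf q $ Some i * volF q) differentiable (at p)"
    using d1 dvolF by simp
  have dF: "\<And>i. F i differentiable (at p)"
    unfolding F_def[abs_def] using d2 dpsiF psi0 by simp
  have dhx: "h differentiable (at x)" using dh[OF x] .
  show "\<forall>i. (\<lambda>y. phi (h y, y) * nf (h y, y) $ Some i * volH g h y / (- gnV g nf (h y, y)))
                differentiable (at x)"
    unfolding Feq using graph_chain(1)[OF dF[unfolded p_def] dhx] by blast
  define dvol where "dvol c = pd c volF p" for c
  define L where "L c = pd c psiF p" for c
  have pdF: "\<And>i c. pd c (F i) p = (pd c phi p * nf p $ Some i + phi p * pd c (\<lambda>q. nf q $ Some i) p) * volF p / psiF p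
        + phi p * nf p $ Some i * dvol c / psiF p - phi p * nf p $ Some i * volF p * L c / (psiF p)^2"
  proof -
    fix i c
    have "pd c (F i) p = ((pd c phi p * nf p $ Some i + phi p * pd c (\<lambda>q. nf q $ Some i) p) * volF p
           + phi p * nf p $ Some i * dvol c) / psiF p - phi p * nf p $ Some i * volF p * L c / (psiF p)^2"
      unfolding F_def[abs_def] pd_def dvol_def L_def
      by (simp add: fd_divide[OF d2 dpsiF psi0] fd_mult[OF d1 dvolF] fd_mult[OF dphi dn[OF pU]])
    then show "?thesis i c" by (simp add: add_divide_distrib)
  qed
  have LHS: "(\<Sum>i\<in>UNIV. spd i (\<lambda>y. F i (h y, y)) x)
     = (\<Sum>i\<in>UNIV. pd (Some i) (F i) p + pd None (F i) p * spd i h x)"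
    using graph_chain(2)[OF dF[unfolded p_def] dhx] p_def by simp
  have core: "(\<Sum>i\<in>UNIV. (pd (Some i) phi p * nf p $ Some i + phi p * pd (Some i) (\<lambda>q. nf q $ Some i) p) * volF p / psiF p
                     + phi p * nf p $ Some i * dvol (Some i) / psiF p - phi p * nf p $ Some i * volF p * L (Some i) / (psiF p)^2
                   + ((pd None phi p * nf p $ Some i + phi p * pd None (\<lambda>q. nf q $ Some i) p) * volF p / psiF p
                     + phi p * nf p $ Some i * dvol None / psiF p - phi p * nf p $ Some i * volF p * L None / (psiF p)^2) * spd i h x)
    = (phi p * ((\<Sum>a\<in>UNIV. pd a (\<lambda>q. nf q $ a) p) + (\<Sum>a\<in>UNIV. \<Sum>b\<in>UNIV. christoffel g a a b p * nf p $ b) - kappa p)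
        + (\<Sum>a\<in>UNIV. nf p $ a * pd a phi p)) * volF p / psiF p"
  proof (rule algebra_core[where G = "\<lambda>a b. g p $ a $ b" and dG = "\<lambda>c a b. pd c (\<lambda>q. g q $ a $ b) p"
        and Gam = "\<lambda>a b c. christoffel g a b c p"])
    show "\<And>a b. g p $ a $ b = g p $ b $ a" by (rule Gsym[OF pU])
    show "\<And>c a b. pd c (\<lambda>q. g q $ a $ b) p = pd c (\<lambda>q. g q $ b $ a) p" by (rule dGsym[OF pU])
    show "psiF p = - (\<Sum>a\<in>UNIV. g p $ a $ None * nf p $ a)" by (simp add: psiF_def)
    show "psiF p \<noteq> 0" by (rule psi0)
    show "\<And>c. L c = - (\<Sum>a\<in>UNIV. pd c (\<lambda>q. g q $ a $ None) p * nf p $ a + g p $ a $ None * pd c (\<lambda>q. nf q $ a) p)"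
      unfolding L_def psiF_def[abs_def] by (rule psi_formula(2)[OF pU])
    show "\<And>c. dvol c = volF p * (\<Sum>a\<in>UNIV. christoffel g a a c p)"
      unfolding dvol_def volF_def[abs_def] by (rule dvol_formula(2)[OF pU])
    show "nf p $ None = (\<Sum>i\<in>UNIV. nf p $ Some i * spd i h x)"
      unfolding p_def by (rule T_formula[OF x])
    show "\<And>i. (\<Sum>a\<in>UNIV. g p $ a $ Some i * nf p $ a) = psiF p * spd i h x"
      unfolding p_def using Nn[OF x] psiF_eq by simp
    show "(\<Sum>a\<in>UNIV. \<Sum>b\<in>UNIV. pd None (\<lambda>q. g q $ a $ b) p * nf p $ a * nf p $ b
      + g p $ a $ b * pd None (\<lambda>q. nf q $ a) p * nf p $ b
      + g p $ a $ b * nf p $ a * pd None (\<lambda>q. nf q $ b) p) = 0"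
      by (rule L0_formula[OF pU])
    show "(\<Sum>a\<in>UNIV. g p $ a $ None * ((\<Sum>b\<in>UNIV. nf p $ b * pd b (\<lambda>q. nf q $ a) p)
            + (\<Sum>b\<in>UNIV. \<Sum>c\<in>UNIV. christoffel g a b c p * nf p $ b * nf p $ c)))
         = kappa p * (\<Sum>a\<in>UNIV. g p $ a $ None * nf p $ a)"
      by (rule Geo_formula[OF pU])
    show "\<And>b c. (\<Sum>a\<in>UNIV. g p $ a $ None * christoffel g a b c p)
     = (pd b (\<lambda>q. g q $ None $ c) p + pd c (\<lambda>q. g q $ None $ b) p - pd None (\<lambda>q. g q $ b $ c) p) / 2"
      by (rule Low_formula[OF pU])
  qed
  have "(\<Sum>i\<in>UNIV. spd i (\<lambda>y. F i (h y, y)) x)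
     = (phi p * thetaH g h nf kappa x + dirderiv nf phi p) * volF p / psiF p"
    unfolding LHS pdF
    unfolding thetaH_def divergence_def dirderiv_def p_def[symmetric] using core by simp
  then show "(\<Sum>i\<in>UNIV. spd i (\<lambda>y. phi (h y, y) * nf (h y, y) $ Some i * volH g h y / (- gnV g nf (h y, y))) x)
          = (phi (h x, x) * thetaH g h nf kappa x + dirderiv nf phi (h x, x)) * volH g h x / (- gnV g nf (h x, x))"
    unfolding Feq by (simp add: psiF_eq volH_def volF_def p_def)
qed

end


theorem mainTheorem9:
  fixes g :: "real \<times> (real^'n::finite) \<Rightarrow> real^('n option)^('n option)"
    and U :: "(real \<times> (real^'n)) set"
    and Om :: "(real^'n) set"
    and h :: "real^'n \<Rightarrow> real"
    and nf :: "real \<times> (real^'n) \<Rightarrow> real^('n option)"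
    and kappa :: "real \<times> (real^'n) \<Rightarrow> real"
    and phi :: "real \<times> (real^'n) \<Rightarrow> real"
  assumes U_open: "open U"
    and Om_open: "open Om"
    and graph_in_U: "\<forall>x\<in>Om. (h x, x) \<in> U"
    and g_C3: "\<forall>a b. Ck 3 U (\<lambda>p. g p $ a $ b)"
    and g_lorentz: "\<forall>p\<in>U. lorentzian (g p)"
    and V_timelike: "\<forall>p\<in>U. g p $ None $ None < 0"
    and h_C2: "Ck 2 Om h"
    and H_null: "\<forall>x\<in>Om. null_graph g h x"
    and n_C1: "\<forall>a. Ck 1 U (\<lambda>p. nf p $ a)"
    and n_lightlike: "\<forall>p\<in>U. gform (g p) (nf p) (nf p) = 0"
    and n_nonzero: "\<forall>p\<in>U. nf p \<noteq> 0"
    and n_future: "\<forall>p\<in>U. gnV g nf p < 0"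
    and n_tangent: "\<forall>x\<in>Om. graph_tangent h x (nf (h x, x))"
    and n_geodesic: "\<forall>p\<in>U. covd g nf nf p = kappa p *\<^sub>R nf p"
    and phi_C1: "Ck 1 U phi"
  shows "(\<forall>x\<in>Om.
            (\<forall>i. (\<lambda>y. phi (h y, y) * ntilde g h nf i y * volH g h y / (- gnV g nf (h y, y)))
                   differentiable (at x)) \<and>
            (\<Sum>i\<in>UNIV. spd i (\<lambda>y. phi (h y, y) * ntilde g h nf i y * volH g h y / (- gnV g nf (h y, y))) x)
              = (phi (h x, x) * thetaH g h nf kappa x + dirderiv nf phi (h x, x))
                * volH g h x / (- gnV g nf (h x, x)))
       \<and> (\<forall>x\<in>Om. thetaH g h nf kappa x =
              (- gnV g nf (h x, x)) / volH g h x *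
              (\<Sum>i\<in>UNIV. spd i (\<lambda>y. bracket g h i y * volH g h y) x))"
proof -
  have M: "mt9 g U Om h nf kappa"
    unfolding mt9_def using U_open Om_open graph_in_U g_C3 g_lorentz h_C2 H_null n_C1 n_lightlike
      n_future n_tangent n_geodesic by blast
  interpret mt9 g U Om h nf kappa by (rule M)
  have phid: "\<forall>p\<in>U. phi differentiable (at p)" using phi_C1 by simp
  have nt: "\<And>i y. y \<in> Om \<Longrightarrow> ntilde g h nf i y = nf (h y, y) $ Some i"
  proof -
    fix i y assume y: "y \<in> Om"
    have "- gnV g nf (h y, y) \<noteq> 0" using n_future graph_in_U y by (metis neg_0_less_iff_less less_irrefl)
    then show "ntilde g h nf i y = nf (h y, y) $ Some i"
      unfolding ntilde_def bracket_eq[OF y] by simp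
  qed
  have part1: "\<forall>x\<in>Om.
            (\<forall>i. (\<lambda>y. phi (h y, y) * ntilde g h nf i y * volH g h y / (- gnV g nf (h y, y)))
                   differentiable (at x)) \<and>
            (\<Sum>i\<in>UNIV. spd i (\<lambda>y. phi (h y, y) * ntilde g h nf i y * volH g h y / (- gnV g nf (h y, y))) x)
              = (phi (h x, x) * thetaH g h nf kappa x + dirderiv nf phi (h x, x))
                * volH g h x / (- gnV g nf (h x, x))"
  proof
    fix x assume x: "x \<in> Om"
    have eq: "\<And>i y. y \<in> Om \<Longrightarrow> phi (h y, y) * nf (h y, y) $ Some i * volH g h y / (- gnV g nf (h y, y))
           = phi (h y, y) * ntilde g h nf i y * volH g h y / (- gnV g nf (h y, y))"
      using nt by simp
    have d: "\<And>i. (\<lambda>y. phi (h y, y) * nf (h y, y) $ Some i * volH g h y / (- gnV g nf (h y, y))) differentiable (at x)"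
      using core(1)[OF x phid] by blast
    have D: "\<And>i. (\<lambda>y. phi (h y, y) * ntilde g h nf i y * volH g h y / (- gnV g nf (h y, y))) differentiable (at x)"
      by (rule fd_local(2)[OF d Om_open x eq])
    have S: "\<And>i. spd i (\<lambda>y. phi (h y, y) * ntilde g h nf i y * volH g h y / (- gnV g nf (h y, y))) x
        = spd i (\<lambda>y. phi (h y, y) * nf (h y, y) $ Some i * volH g h y / (- gnV g nf (h y, y))) x"
      unfolding spd_def using fd_local(1)[OF d Om_open x eq] by simp
    show "(\<forall>i. (\<lambda>y. phi (h y, y) * ntilde g h nf i y * volH g h y / (- gnV g nf (h y, y)))
                   differentiable (at x)) \<and>
            (\<Sum>i\<in>UNIV. spd i (\<lambda>y. phi (h y, y) * ntilde g h nf i y * volH g h y / (- gnV g nf (h y, y))) x)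
              = (phi (h x, x) * thetaH g h nf kappa x + dirderiv nf phi (h x, x))
                * volH g h x / (- gnV g nf (h x, x))"
      using D S core(2)[OF x phid] by simp
  qed
  have part2: "\<forall>x\<in>Om. thetaH g h nf kappa x =
              (- gnV g nf (h x, x)) / volH g h x *
              (\<Sum>i\<in>UNIV. spd i (\<lambda>y. bracket g h i y * volH g h y) x)"
  proof
    fix x assume x: "x \<in> Om"
    have one: "\<forall>p\<in>U. (\<lambda>q. 1::real) differentiable (at p)" by simp
    have eq: "\<And>i y. y \<in> Om \<Longrightarrow> 1 * nf (h y, y) $ Some i * volH g h y / (- gnV g nf (h y, y))
           = bracket g h i y * volH g h y"
      using bracket_eq by simp
    have d: "\<And>i. (\<lambda>y. 1 * nf (h y, y) $ Some i * volH g h y / (- gnV g nf (h y, y))) differentiable (at x)"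
      using core(1)[OF x one] by blast
    have S: "\<And>i. spd i (\<lambda>y. bracket g h i y * volH g h y) x
        = spd i (\<lambda>y. 1 * nf (h y, y) $ Some i * volH g h y / (- gnV g nf (h y, y))) x"
      unfolding spd_def using fd_local(1)[OF d Om_open x eq] by simp
    have dd: "dirderiv nf (\<lambda>q. 1) (h x, x) = 0"
      unfolding dirderiv_def pd_def by (simp add: fd_const)
    have C: "(\<Sum>i\<in>UNIV. spd i (\<lambda>y. bracket g h i y * volH g h y) x)
         = thetaH g h nf kappa x * volH g h x / (- gnV g nf (h x, x))"
      unfolding S using core(2)[OF x one] dd by simp
    have pU: "(h x, x) \<in> U" using graph_in_U x by blast
    have psi: "- gnV g nf (h x, x) > 0" using n_future pU by simp
    have vol: "volH g h x > 0" unfolding volH_def using detneg[OF pU] by simp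
    show "thetaH g h nf kappa x =
              (- gnV g nf (h x, x)) / volH g h x *
              (\<Sum>i\<in>UNIV. spd i (\<lambda>y. bracket g h i y * volH g h y) x)"
      unfolding C using psi vol by (simp add: field_simps)
  qed
  show ?thesis using part1 part2 by blast
qed


end
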